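(* Let $\sigma$ be a 2-structure and $X\subsetneq V(\sigma)$ with $\sigma[X]$ prime; write $\overline{X}=V(\sigma)\setminus X$. Suppose Statement (S1) holds, i.e. there is no $v\in\overline{X}$ with $\sigma[X\cup\{v\}]$ prime. Let $M\subseteq\overline{X}$. If $M$ is a module of $\sigma$, then $M$ is a module of the outside graph $\Gamma_{(\sigma,\overline{X})}$, and there exist $B_p\in p_{(\sigma,\overline{X})}$ and $B_q\in q_{(\sigma,\overline{X})}$ such that $M\subseteq B_q\subseteq B_p$ and $M$ is a module of $\sigma[B_p]$.
   Context: A 2-structure $\sigma$ consists of a vertex set $V(\sigma)$ and an equivalence relation $\equiv_\sigma$ on ordered pairs of distinct vertices; $E(\sigma)$ is its set of classes; $\sigma[W]$ is the induced 2-structure on $W$. A module is a set $M$ such that for all $x,y\in M$ and $v\notin M$, $(x,v)\equiv_\sigma(y,v)$ and $(v,x)\equiv_\sigma(v,y)$; $\sigma$ is prime if $|V(\sigma)|\geq3$ and its only modules are $\emptyset$, $V(\sigma)$ and singletons. A graph is viewed as a 2-structure where $(u,v)\equiv(x,y)$ iff both pairs are edges or both non-edges (so a module of a graph is a vertex set $M$ such that each outside vertex is adjacent to all or none of $M$). Given $\sigma[X]$ prime: ${\rm Ext}_\sigma(X)=\{v\in\overline{X}:\sigma[X\cup\{v\}]\text{ prime}\}$; $\langle X\rangle_\sigma=\{v\in\overline{X}: X\text{ is a module of }\sigma[X\cup\{v\}]\}$; for $\alpha\in X$, $X_\sigma(\alpha)=\{v\in\overline{X}:\{\alpha,v\}\text{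 is a module of }\sigma[X\cup\{v\}]\}$. $p_{(\sigma,\overline{X})}$ is the partition of $\overline{X}$ formed by the nonempty sets among ${\rm Ext}_\sigma(X)$, $\langle X\rangle_\sigma$, $X_\sigma(\alpha)$ ($\alpha\in X$). For $e,f\in E(\sigma)$: $\langle X\rangle^{(e,f)}_\sigma=\{v\in\langle X\rangle_\sigma:(v,\alpha)\in e,(\alpha,v)\in f\}$ for any $\alpha\in X$; $X^{(e,f)}_\sigma(\alpha)=\{v\in X_\sigma(\alpha):(v,\alpha)\in e,(\alpha,v)\in f\}$. $q_{(\sigma,\overline{X})}$ is the partition of $\overline{X}$ formed by the nonempty sets among ${\rm Ext}_\sigma(X)$, $\langle X\rangle^{(e,f)}_\sigma$, $X^{(e,f)}_\sigma(\alpha)$ ($e,f\in E(\sigma)$, $\alpha\in X$). The outside graph $\Gamma_{(\sigma,\overline{X})}$ has vertex set $\overline{X}$ and edges the 2-element sets $Y\subseteq\overline{X}$ with $\sigma[X\cup Y]$ prime. *)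

theory Defs
  imports Main
begin

definition offdiag :: "'a set \<Rightarrow> ('a \<times> 'a) set" where
  "offdiag V = {(x, y). x \<in> V \<and> y \<in> V \<and> x \<noteq> y}"

definition two_structure :: "'a set \<Rightarrow> (('a \<times> 'a) \<times> ('a \<times> 'a)) set \<Rightarrow> bool" where
  "two_structure V R \<longleftrightarrow> equiv (offdiag V) R"

definition classes :: "'a set \<Rightarrow> (('a \<times> 'a) \<times> ('a \<times> 'a)) set \<Rightarrow> ('a \<times> 'a) set set" where
  "classes V R = offdiag V // R"

definition induced :: "(('a \<times> 'a) \<times> ('a \<times> 'a)) set \<Rightarrow> 'a set \<Rightarrow> (('a \<times> 'a) \<times> ('a \<times> 'a)) set" where
  "induced R W = R \<inter> (offdiag W \<times> offdiag W)"

definition is_module :: "'a set \<Rightarrow> (('a \<times> 'a) \<times> ('a \<times> 'a)) set \<Rightarrow> 'a set \<Rightarrow> bool" where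
  "is_module V R M \<longleftrightarrow> M \<subseteq> V \<and>
     (\<forall>x\<in>M. \<forall>y\<in>M. \<forall>v\<in>V - M. ((x, v), (y, v)) \<in> R \<and> ((v, x), (v, y)) \<in> R)"

definition is_prime :: "'a set \<Rightarrow> (('a \<times> 'a) \<times> ('a \<times> 'a)) set \<Rightarrow> bool" where
  "is_prime V R \<longleftrightarrow> (\<exists>a\<in>V. \<exists>b\<in>V. \<exists>c\<in>V. a \<noteq> b \<and> a \<noteq> c \<and> b \<noteq> c) \<and>
     (\<forall>M. is_module V R M \<longrightarrow> M = {} \<or> M = V \<or> (\<exists>x. M = {x}))"

definition prime_sub :: "'a set \<Rightarrow> (('a \<times> 'a) \<times> ('a \<times> 'a)) set \<Rightarrow> 'a set \<Rightarrow> bool" where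
  "prime_sub V R W \<longleftrightarrow> W \<subseteq> V \<and> is_prime W (induced R W)"

definition Ext :: "'a set \<Rightarrow> (('a \<times> 'a) \<times> ('a \<times> 'a)) set \<Rightarrow> 'a set \<Rightarrow> 'a set" where
  "Ext V R X = {v \<in> V - X. prime_sub V R (X \<union> {v})}"

definition Enc :: "'a set \<Rightarrow> (('a \<times> 'a) \<times> ('a \<times> 'a)) set \<Rightarrow> 'a set \<Rightarrow> 'a set" where
  "Enc V R X = {v \<in> V - X. is_module (X \<union> {v}) (induced R (X \<union> {v})) X}"

definition Xalpha :: "'a set \<Rightarrow> (('a \<times> 'a) \<times> ('a \<times> 'a)) set \<Rightarrow> 'a set \<Rightarrow> 'a \<Rightarrow> 'a set" where
  "Xalpha V R X \<alpha> = {v \<in> V - X. is_module (X \<union> {v}) (induced R (X \<union> {v})) {\<alpha>, v}}"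

text \<open>For v in Enc, the pair classes do not depend on the choice of alpha in X;
  we require the condition for every alpha in X (X is nonempty when prime).\<close>
definition Enc_ef :: "'a set \<Rightarrow> (('a \<times> 'a) \<times> ('a \<times> 'a)) set \<Rightarrow> 'a set
    \<Rightarrow> ('a \<times> 'a) set \<Rightarrow> ('a \<times> 'a) set \<Rightarrow> 'a set" where
  "Enc_ef V R X e f = {v \<in> Enc V R X. \<forall>\<alpha>\<in>X. (v, \<alpha>) \<in> e \<and> (\<alpha>, v) \<in> f}"

definition Xalpha_ef :: "'a set \<Rightarrow> (('a \<times> 'a) \<times> ('a \<times> 'a)) set \<Rightarrow> 'a set \<Rightarrow> 'a
    \<Rightarrow> ('a \<times> 'a) set \<Rightarrow> ('a \<times> 'a) set \<Rightarrow> 'a set" where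
  "Xalpha_ef V R X \<alpha> e f = {v \<in> Xalpha V R X \<alpha>. (v, \<alpha>) \<in> e \<and> (\<alpha>, v) \<in> f}"

definition part_p :: "'a set \<Rightarrow> (('a \<times> 'a) \<times> ('a \<times> 'a)) set \<Rightarrow> 'a set \<Rightarrow> 'a set set" where
  "part_p V R X = {B. B \<noteq> {} \<and>
     (B = Ext V R X \<or> B = Enc V R X \<or> (\<exists>\<alpha>\<in>X. B = Xalpha V R X \<alpha>))}"

definition part_q :: "'a set \<Rightarrow> (('a \<times> 'a) \<times> ('a \<times> 'a)) set \<Rightarrow> 'a set \<Rightarrow> 'a set set" where
  "part_q V R X = {B. B \<noteq> {} \<and>
     (B = Ext V R X \<or>
      (\<exists>e\<in>classes V R. \<exists>f\<in>classes V R. B = Enc_ef V R X e f) \<or>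
      (\<exists>e\<in>classes V R. \<exists>f\<in>classes V R. \<exists>\<alpha>\<in>X. B = Xalpha_ef V R X \<alpha> e f))}"

definition out_adj :: "'a set \<Rightarrow> (('a \<times> 'a) \<times> ('a \<times> 'a)) set \<Rightarrow> 'a set \<Rightarrow> 'a \<Rightarrow> 'a \<Rightarrow> bool" where
  "out_adj V R X u w \<longleftrightarrow> u \<in> V - X \<and> w \<in> V - X \<and> u \<noteq> w \<and> prime_sub V R (X \<union> {u, w})"

definition graph_module :: "'a set \<Rightarrow> ('a \<Rightarrow> 'a \<Rightarrow> bool) \<Rightarrow> 'a set \<Rightarrow> bool" where
  "graph_module S adj M \<longleftrightarrow> M \<subseteq> S \<and>
     (\<forall>u\<in>S - M. (\<forall>x\<in>M. adj u x) \<or> (\<forall>x\<in>M. \<not> adj u x))"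

end

theory Submission
  imports Defs
begin

lemma eqv:
  assumes "two_structure V R"
  shows "R \<subseteq> offdiag V \<times> offdiag V" "\<And>a. a \<in> offdiag V \<Longrightarrow> (a,a) \<in> R"
    "\<And>a b. (a,b)\<in>R \<Longrightarrow> (b,a)\<in>R" "\<And>a b c. (a,b)\<in>R \<Longrightarrow> (b,c)\<in>R \<Longrightarrow> (a,c)\<in>R"
proof -
  have e: "equiv (offdiag V) R" using assms unfolding two_structure_def .
  show "R \<subseteq> offdiag V \<times> offdiag V" using e unfolding equiv_def refl_on_def by blast
  show "\<And>a. a \<in> offdiag V \<Longrightarrow> (a,a) \<in> R" using e by (meson equiv_def refl_onD)
  show "\<And>a b. (a,b)\<in>R \<Longrightarrow> (b,a)\<in>R" using e by (meson equiv_def symD)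
  show "\<And>a b c. (a,b)\<in>R \<Longrightarrow> (b,c)\<in>R \<Longrightarrow> (a,c)\<in>R" using e by (meson equiv_def transD)
qed
lemma restrict_module:
  assumes "is_module W (induced R W) N" "W0 \<subseteq> W"
  shows "is_module W0 (induced R W0) (N \<inter> W0)"
  unfolding is_module_def
proof (rule conjI)
  show "N \<inter> W0 \<subseteq> W0" by blast
  show "\<forall>x\<in>N \<inter> W0. \<forall>y\<in>N \<inter> W0. \<forall>v\<in>W0 - N \<inter> W0. ((x, v), y, v) \<in> induced R W0 \<and> ((v, x), v, y) \<in> induced R W0"
  proof (intro ballI)
  fix x y v assume x: "x \<in> N \<inter> W0" and y: "y \<in> N \<inter> W0" and v: "v \<in> W0 - N \<inter> W0"
  have "v \<in> W - N" using v assms(2) by blast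
  then have "((x,v),(y,v)) \<in> R \<and> ((v,x),(v,y)) \<in> R"
    using assms(1) x y unfolding is_module_def induced_def by blast
  moreover have "(x,v) \<in> offdiag W0" "(y,v) \<in> offdiag W0" "(v,x) \<in> offdiag W0" "(v,y) \<in> offdiag W0"
    using x y v unfolding offdiag_def by auto
  ultimately show "((x, v), y, v) \<in> induced R W0 \<and> ((v, x), v, y) \<in> induced R W0"
    unfolding induced_def by blast
  qed
qed
lemma three_cases:
  assumes "X \<subseteq> V" "is_prime X (induced R X)" "v \<in> V - X"
    "\<not> is_prime (X \<union> {v}) (induced R (X \<union> {v}))"
  shows "v \<in> Enc V R X \<or> (\<exists>\<alpha>\<in>X. v \<in> Xalpha V R X \<alpha>)"
proof -
  have three: "\<exists>a\<in>X \<union> {v}. \<exists>b\<in>X \<union> {v}. \<exists>c\<in>X \<union> {v}. a \<noteq> b \<and> a \<noteq> c \<and> b \<noteq> c"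
    using assms(2) unfolding is_prime_def by blast
  then obtain N where N: "is_module (X \<union> {v}) (induced R (X \<union> {v})) N"
    "N \<noteq> {}" "N \<noteq> X \<union> {v}" "\<And>x. N \<noteq> {x}"
    using assms(4) unfolding is_prime_def by blast
  have "is_module X (induced R X) (N \<inter> X)"
    using restrict_module[OF N(1)] by blast
  then have c: "N \<inter> X = {} \<or> N \<inter> X = X \<or> (\<exists>x. N \<inter> X = {x})"
    using assms(2) unfolding is_prime_def by blast
  have NW: "N \<subseteq> X \<union> {v}" using N(1) unfolding is_module_def by blast
  have vX: "v \<notin> X" using assms(3) by blast
  show ?thesis
  proof -
    { assume "N \<inter> X = {}"
      then have "N \<subseteq> {v}" using NW by blast
      then have False using N(2,4) by blast }
    moreover
    { assume "N \<inter> X = X"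
      then have "N = X" using NW N(3) by blast
      then have "v \<in> Enc V R X" using N(1) assms(3) unfolding Enc_def by blast }
    moreover
    { fix x assume x: "N \<inter> X = {x}"
      then have "v \<in> N" using NW N(4) by blast
      then have "N = {x, v}" using x NW by blast
      then have "v \<in> Xalpha V R X x" using N(1) assms(3) unfolding Xalpha_def by blast
      moreover have "x \<in> X" using x by blast
      ultimately have "\<exists>\<alpha>\<in>X. v \<in> Xalpha V R X \<alpha>" by blast }
    ultimately show ?thesis using c by blast
  qed
qed

lemma iso_prime:
  assumes ts: "two_structure V R" and WV: "W \<subseteq> V" and bij: "bij_betw f W W'"
    and rel: "\<forall>p\<in>W. \<forall>q\<in>W. p \<noteq> q \<longrightarrow> ((p,q),(f p, f q)) \<in> R"
    and pr: "is_prime W (induced R W)"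
  shows "is_prime W' (induced R W')"
proof -
  have inj: "inj_on f W" and img: "f ` W = W'" using bij unfolding bij_betw_def by auto
  note E = eqv[OF ts]
  have "\<exists>a\<in>W'. \<exists>b\<in>W'. \<exists>c\<in>W'. a \<noteq> b \<and> a \<noteq> c \<and> b \<noteq> c"
  proof -
    obtain a b c where "a\<in>W" "b\<in>W" "c\<in>W" "a \<noteq> b" "a \<noteq> c" "b \<noteq> c"
      using pr unfolding is_prime_def by blast
    then show ?thesis using inj img unfolding inj_on_def by blast
  qed
  moreover have "N = {} \<or> N = W' \<or> (\<exists>x. N = {x})" if N: "is_module W' (induced R W') N" for N
  proof -
    define N0 where "N0 = {a\<in>W. f a \<in> N}"
    have NW': "N \<subseteq> W'" using N unfolding is_module_def by blast
    have fN0: "f ` N0 = N" using NW' img unfolding N0_def by blast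
    have "is_module W (induced R W) N0"
      unfolding is_module_def
    proof (rule conjI)
      show "N0 \<subseteq> W" unfolding N0_def by blast
      show "\<forall>x\<in>N0. \<forall>y\<in>N0. \<forall>v\<in>W - N0. ((x, v), y, v) \<in> induced R W \<and> ((v, x), v, y) \<in> induced R W"
      proof (intro ballI)
      fix a b c assume a: "a \<in> N0" and b: "b \<in> N0" and c: "c \<in> W - N0"
      have fa: "f a \<in> N" "f b \<in> N" "f c \<in> W' - N" using a b c img unfolding N0_def by auto
      have ac: "a \<noteq> c" "b \<noteq> c" "a \<in> W" "b \<in> W" "c \<in> W" using a b c unfolding N0_def by auto
      have r1: "((f a, f c), (f b, f c)) \<in> R" "((f c, f a), (f c, f b)) \<in> R"
        using N fa unfolding is_module_def induced_def by auto
      have r2: "((a,c),(f a, f c)) \<in> R" "((b,c),(f b, f c)) \<in> R"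
        "((c,a),(f c, f a)) \<in> R" "((c,b),(f c, f b)) \<in> R"
        using rel ac by auto
      have "((a,c),(b,c)) \<in> R" using r1 r2 E(3,4) by meson
      moreover have "((c,a),(c,b)) \<in> R" using r1 r2 E(3,4) by meson
      moreover have "(a,c) \<in> offdiag W" "(b,c) \<in> offdiag W" "(c,a) \<in> offdiag W" "(c,b) \<in> offdiag W"
        using ac unfolding offdiag_def by auto
      ultimately show "((a, c), b, c) \<in> induced R W \<and> ((c, a), c, b) \<in> induced R W"
        unfolding induced_def by auto
      qed
    qed
    then have "N0 = {} \<or> N0 = W \<or> (\<exists>x. N0 = {x})" using pr unfolding is_prime_def by blast
    then show ?thesis using fN0 img by auto
  qed
  ultimately show ?thesis unfolding is_prime_def by blast
qed

lemma module_sub: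
  assumes "is_module V R M" "M \<subseteq> B" "B \<subseteq> V"
  shows "is_module B (induced R B) M"
  unfolding is_module_def
proof (rule conjI)
  show "M \<subseteq> B" by fact
  show "\<forall>x\<in>M. \<forall>y\<in>M. \<forall>v\<in>B - M. ((x, v), y, v) \<in> induced R B \<and> ((v, x), v, y) \<in> induced R B"
  proof (intro ballI)
  fix x y v assume x: "x \<in> M" and y: "y \<in> M" and v: "v \<in> B - M"
  have "v \<in> V - M" using v assms(3) by blast
  then have "((x,v),(y,v)) \<in> R \<and> ((v,x),(v,y)) \<in> R"
    using assms(1) x y unfolding is_module_def by blast
  moreover have "(x,v) \<in> offdiag B" "(y,v) \<in> offdiag B" "(v,x) \<in> offdiag B" "(v,y) \<in> offdiag B"
    using x y v assms(2) unfolding offdiag_def by auto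
  ultimately show "((x, v), y, v) \<in> induced R B \<and> ((v, x), v, y) \<in> induced R B"
    unfolding induced_def by blast
  qed
qed

theorem lemma2p5:
  fixes V :: "'a set" and R :: "(('a \<times> 'a) \<times> ('a \<times> 'a)) set" and X M :: "'a set"
  assumes "two_structure V R"
    and "X \<subset> V"
    and "is_prime X (induced R X)"
    and S1: "\<not> (\<exists>v\<in>V - X. is_prime (X \<union> {v}) (induced R (X \<union> {v})))"
    and "M \<subseteq> V - X"
    and "is_module V R M"
  shows "graph_module (V - X) (out_adj V R X) M \<and>
         (\<exists>Bp\<in>part_p V R X. \<exists>Bq\<in>part_q V R X.
            M \<subseteq> Bq \<and> Bq \<subseteq> Bp \<and> is_module Bp (induced R Bp) M)"
proof -
  note E = eqv[OF assms(1)]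
  have XV: "X \<subseteq> V" using assms(2) by blast
  obtain \<alpha>0 where a0: "\<alpha>0 \<in> X" using assms(3) unfolding is_prime_def by blast
  have MV: "M \<subseteq> V" using assms(5) by blast
  have modR: "((a,c),(b,c)) \<in> R \<and> ((c,a),(c,b)) \<in> R" if "a \<in> M" "b \<in> M" "c \<in> V - M" for a b c
    using assms(6) that unfolding is_module_def by blast
  have adj: "out_adj V R X u y" if u: "u \<in> (V - X) - M" and x: "x \<in> M" and y: "y \<in> M"
    and ux: "out_adj V R X u x" for u x y
  proof -
    have xn: "x \<notin> X \<union> {u}" "y \<notin> X \<union> {u}" using u x y assms(5) by auto
    define f where "f = (\<lambda>z. if z = x then y else z)"
    have bij: "bij_betw f (X \<union> {u, x}) (X \<union> {u, y})"
      unfolding bij_betw_def inj_on_def f_def using xn by auto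
    have rel: "\<forall>p\<in>X \<union> {u, x}. \<forall>q\<in>X \<union> {u, x}. p \<noteq> q \<longrightarrow> ((p,q),(f p, f q)) \<in> R"
    proof (intro ballI impI)
      fix p q assume p: "p \<in> X \<union> {u, x}" and q: "q \<in> X \<union> {u, x}" and pq: "p \<noteq> q"
      show "((p,q),(f p, f q)) \<in> R"
      proof (cases "p = x")
        case True
        then have "q \<in> V - M" using q pq u XV assms(5) by auto
        then show ?thesis using modR[OF x y] True pq unfolding f_def by auto
      next
        case False
        note pF = False
        show ?thesis
        proof (cases "q = x")
          case True
          then have "p \<in> V - M" using p pq u XV assms(5) by auto
          then show ?thesis using modR[OF x y] True pF unfolding f_def by auto
        next
          case False
          have "(p,q) \<in> offdiag V" using p q pq u XV MV x unfolding offdiag_def by auto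
          then show ?thesis using E(2) False pF unfolding f_def by auto
        qed
      qed
    qed
    have ps: "prime_sub V R (X \<union> {u, x})" using ux unfolding out_adj_def by blast
    then have "is_prime (X \<union> {u, y}) (induced R (X \<union> {u, y}))"
      using iso_prime[OF assms(1) _ bij rel] unfolding prime_sub_def by blast
    then show ?thesis using u y assms(5) XV MV xn unfolding out_adj_def prime_sub_def by auto
  qed
  have gm: "graph_module (V - X) (out_adj V R X) M"
    unfolding graph_module_def
  proof (intro conjI ballI)
    show "M \<subseteq> V - X" by fact
    fix u assume u: "u \<in> V - X - M"
    show "(\<forall>x\<in>M. out_adj V R X u x) \<or> (\<forall>x\<in>M. \<not> out_adj V R X u x)"
      using adj[OF u] by blast
  qed
  obtain m where m: "m \<in> V - X"
    and hm: "\<forall>m'\<in>M. \<forall>x\<in>X. ((m',x),(m,x)) \<in> R \<and> ((x,m'),(x,m)) \<in> R"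
  proof (cases "M = {}")
    case True
    then show ?thesis using that assms(2) by blast
  next
    case False
    then obtain m where "m \<in> M" by blast
    moreover have "X \<subseteq> V - M" using assms(5) XV by blast
    ultimately show ?thesis using that modR assms(5) by blast
  qed
  have mX: "\<And>x. x \<in> X \<Longrightarrow> (m,x) \<in> offdiag V \<and> (x,m) \<in> offdiag V"
    using m XV unfolding offdiag_def by auto
  have Mm: "M' \<subseteq> V - X" if "M' = M" for M' using assms(5) that by blast
  have cases: "m \<in> Enc V R X \<or> (\<exists>\<alpha>\<in>X. m \<in> Xalpha V R X \<alpha>)"
    using three_cases[OF XV assms(3) m] S1 m by blast
  have ex: "\<exists>Bp\<in>part_p V R X. \<exists>Bq\<in>part_q V R X. M \<subseteq> Bq \<and> Bq \<subseteq> Bp"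
  proof (cases "m \<in> Enc V R X")
    case True
    define e where "e = R `` {(m, \<alpha>0)}"
    define f where "f = R `` {(\<alpha>0, m)}"
    have ef: "e \<in> classes V R" "f \<in> classes V R"
      unfolding e_def f_def classes_def using mX[OF a0] by (auto intro: quotientI)
    have mmod: "((a, m), (b, m)) \<in> R \<and> ((m, a), (m, b)) \<in> R" if "a \<in> X" "b \<in> X" for a b
      using True that m unfolding Enc_def is_module_def induced_def by blast
    have encM: "M \<subseteq> Enc V R X"
    proof
      fix m' assume m': "m' \<in> M"
      have "m' \<in> V - X" using m' assms(5) by blast
      moreover have "((a, m'), (b, m')) \<in> R \<and> ((m', a), (m', b)) \<in> R" if "a \<in> X" "b \<in> X" for a b
      proof -
        have "((a, m'), (a, m)) \<in> R" "((b, m'), (b, m)) \<in> R"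
             "((m', a), (m, a)) \<in> R" "((m', b), (m, b)) \<in> R"
          using hm m' that by auto
        then show ?thesis using mmod[OF that] E(3,4) by meson
      qed
      moreover have "m' \<notin> X" using m' assms(5) by blast
      ultimately show "m' \<in> Enc V R X" unfolding Enc_def is_module_def induced_def offdiag_def
        by auto
    qed
    define Bq where "Bq = Enc_ef V R X e f"
    have MBq: "M \<subseteq> Bq"
    proof
      fix m' assume m': "m' \<in> M"
      have "(m', \<alpha>) \<in> e \<and> (\<alpha>, m') \<in> f" if "\<alpha> \<in> X" for \<alpha>
      proof -
        have "((m', \<alpha>), (m, \<alpha>)) \<in> R" "((\<alpha>, m'), (\<alpha>, m)) \<in> R" using hm m' that by auto
        then show ?thesis using mmod[OF a0 that] E(3,4) unfolding e_def f_def by blast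
      qed
      then show "m' \<in> Bq" using encM m' unfolding Bq_def Enc_ef_def by blast
    qed
    have mBq: "m \<in> Bq"
      using True mmod[OF a0] unfolding Bq_def Enc_ef_def e_def f_def by blast
    have "Bq \<in> part_q V R X" using mBq ef unfolding part_q_def Bq_def by blast
    moreover have "Enc V R X \<in> part_p V R X" using True unfolding part_p_def by blast
    moreover have "Bq \<subseteq> Enc V R X" unfolding Bq_def Enc_ef_def by blast
    ultimately show ?thesis using MBq by blast
  next
    case False
    then obtain \<alpha> where a: "\<alpha> \<in> X" and ma: "m \<in> Xalpha V R X \<alpha>" using cases by blast
    define e where "e = R `` {(m, \<alpha>)}"
    define f where "f = R `` {(\<alpha>, m)}"
    have ef: "e \<in> classes V R" "f \<in> classes V R"
      unfolding e_def f_def classes_def using mX[OF a] by (auto intro: quotientI)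
    have mmod: "((\<alpha>, z), (m, z)) \<in> R \<and> ((z, \<alpha>), (z, m)) \<in> R" if "z \<in> X" "z \<noteq> \<alpha>" for z
      using ma that m unfolding Xalpha_def is_module_def induced_def by blast
    have xaM: "M \<subseteq> Xalpha V R X \<alpha>"
    proof
      fix m' assume m': "m' \<in> M"
      have m'V: "m' \<in> V - X" using m' assms(5) by blast
      have key: "((\<alpha>, z), (m', z)) \<in> R \<and> ((z, \<alpha>), (z, m')) \<in> R" if "z \<in> X" "z \<noteq> \<alpha>" for z
      proof -
        have "((m', z), (m, z)) \<in> R" "((z, m'), (z, m)) \<in> R" using hm m' that by auto
        then show ?thesis using mmod[OF that] E(3,4) by meson
      qed
      have "is_module (X \<union> {m'}) (induced R (X \<union> {m'})) {\<alpha>, m'}"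
        unfolding is_module_def
      proof (rule conjI)
        show "{\<alpha>, m'} \<subseteq> X \<union> {m'}" using a by blast
        show "\<forall>x\<in>{\<alpha>, m'}. \<forall>y\<in>{\<alpha>, m'}. \<forall>v\<in>X \<union> {m'} - {\<alpha>, m'}. ((x, v), y, v) \<in> induced R (X \<union> {m'}) \<and> ((v, x), v, y) \<in> induced R (X \<union> {m'})"
        proof (intro ballI)
        fix p q z assume p: "p \<in> {\<alpha>, m'}" and q: "q \<in> {\<alpha>, m'}" and z: "z \<in> X \<union> {m'} - {\<alpha>, m'}"
        have zX: "z \<in> X" "z \<noteq> \<alpha>" "z \<noteq> m'" using z by auto
        have off: "(p, z) \<in> offdiag (X \<union> {m'})" "(q, z) \<in> offdiag (X \<union> {m'})"
          "(z, p) \<in> offdiag (X \<union> {m'})" "(z, q) \<in> offdiag (X \<union> {m'})"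
          using p q zX a unfolding offdiag_def by auto
        have offV: "(\<alpha>, z) \<in> offdiag V" "(z, \<alpha>) \<in> offdiag V" "(m', z) \<in> offdiag V" "(z, m') \<in> offdiag V"
          using zX a XV m'V unfolding offdiag_def by auto
        have s1: "((\<alpha>, z), (\<alpha>, z)) \<in> R" "((m', z), (m', z)) \<in> R"
          "((z, \<alpha>), (z, \<alpha>)) \<in> R" "((z, m'), (z, m')) \<in> R" using E(2) offV by auto
        have s2: "((m', z), (\<alpha>, z)) \<in> R" "((z, m'), (z, \<alpha>)) \<in> R"
          using E(3) key[OF zX(1,2)] by blast+
        have "((p, z), (q, z)) \<in> R \<and> ((z, p), (z, q)) \<in> R"
          using p q key[OF zX(1,2)] s1 s2 by auto
        then show "((p, z), q, z) \<in> induced R (X \<union> {m'}) \<and> ((z, p), z, q) \<in> induced R (X \<union> {m'})"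
          using off unfolding induced_def by auto
        qed
      qed
      then show "m' \<in> Xalpha V R X \<alpha>" using m'V unfolding Xalpha_def by blast
    qed
    define Bq where "Bq = Xalpha_ef V R X \<alpha> e f"
    have MBq: "M \<subseteq> Bq"
    proof
      fix m' assume m': "m' \<in> M"
      have "((m', \<alpha>), (m, \<alpha>)) \<in> R" "((\<alpha>, m'), (\<alpha>, m)) \<in> R" using hm m' a by auto
      then have "(m', \<alpha>) \<in> e \<and> (\<alpha>, m') \<in> f" using E(3) unfolding e_def f_def by blast
      then show "m' \<in> Bq" using xaM m' unfolding Bq_def Xalpha_ef_def by blast
    qed
    have mBq: "m \<in> Bq"
      using ma E(2) mX[OF a] unfolding Bq_def Xalpha_ef_def e_def f_def by blast
    have "Bq \<in> part_q V R X" using mBq ef a unfolding part_q_def Bq_def by blast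
    moreover have "Xalpha V R X \<alpha> \<in> part_p V R X" using ma a unfolding part_p_def by blast
    moreover have "Bq \<subseteq> Xalpha V R X \<alpha>" unfolding Bq_def Xalpha_ef_def by blast
    ultimately show ?thesis using MBq by blast
  qed
  have pV: "B \<subseteq> V" if "B \<in> part_p V R X" for B
    using that unfolding part_p_def Ext_def Enc_def Xalpha_def by auto
  from ex obtain Bp Bq where B: "Bp \<in> part_p V R X" "Bq \<in> part_q V R X" "M \<subseteq> Bq" "Bq \<subseteq> Bp"
    by blast
  have "is_module Bp (induced R Bp) M"
    using module_sub[OF assms(6)] B pV[OF B(1)] by blast
  then show ?thesis using gm B by blast
qed

end
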